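(* Let $G$ be a finite abelian group and let $M$ be a finite inverse $\hat G$-linear monoid of dimension $n$. Then there exists an injective monoid homomorphism $\phi_M:M\to\mathrm{End}_{\hat G}(M)\cong I_n(\hat G)$ such that $\phi_M(x^* )=\phi_M(x)^*$ and $\phi_M(gx)=g\phi_M(x)$ for all $x\in M$ and $g\in G$.
   Context: $\hat G=G\sqcup\{0\}$ with $0$ absorbing. $\mathrm{Vect}_{\hat G}$: objects are finite pointed sets with an action of $\hat G$ ($0v=0$, $g0=0$) such that $G$ acts freely on nonzero elements; morphisms $f$ satisfy $f(0)=0$, $f(gv)=gf(v)$, $f(v_1)=f(v_2)\neq0\Rightarrow Gv_1=Gv_2$. A $\hat G$-linear monoid is a finite monoid $M$ with absorbing element $0_M$ containing $G$ as a subgroup of units commuting with all of $M$, with $G$ acting freely by translation on $M\setminus\{0_M\}$; thus $M$ is an object of $\mathrm{Vect}_{\hat G}$, its dimension is the number of $G$-orbits in $M\setminus\{0_M\}$, and $\mathrm{End}_{\hat G}(M)$ is its endomorphism monoid in $\mathrm{Vect}_{\hat G}$, with $g\phi$ denoting the composite of $\phi$ with scalar multiplication by $g$. $I_n(\hat G)$ is the monoid of $n\times n$ matrices with entries in $\hat G$ having at most one nonzero entry in each row and column, under matrix multiplication; it is an inverse monoid and isomorphic to $\mathrm{End}_{\hat G}(\hat G^{\oplus n})$. A monoid is inverse if each $x$ has a unique $x^*$ with $xx^*x=x$ and $x^*xx^*=x^*$ (its $*$-inverse). *)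

theory Defs
  imports "HOL-Algebra.Group"
begin

definition hatG_linear_monoid :: "'m monoid \<Rightarrow> 'm set \<Rightarrow> 'm \<Rightarrow> bool" where
  "hatG_linear_monoid M G z \<longleftrightarrow>
     monoid M \<and> finite (carrier M) \<and>
     z \<in> carrier M \<and> (\<forall>x\<in>carrier M. z \<otimes>\<^bsub>M\<^esub> x = z \<and> x \<otimes>\<^bsub>M\<^esub> z = z) \<and>
     subgroup G (units_of M) \<and>
     (\<forall>g\<in>G. \<forall>h\<in>G. g \<otimes>\<^bsub>M\<^esub> h = h \<otimes>\<^bsub>M\<^esub> g) \<and>
     (\<forall>g\<in>G. \<forall>x\<in>carrier M. g \<otimes>\<^bsub>M\<^esub> x = x \<otimes>\<^bsub>M\<^esub> g) \<and>
     (\<forall>g\<in>G. \<forall>x\<in>carrier M - {z}. g \<otimes>\<^bsub>M\<^esub> x = x \<longrightarrow> g = \<one>\<^bsub>M\<^esub>)"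

definition inverse_monoid :: "('a, 'b) monoid_scheme \<Rightarrow> bool" where
  "inverse_monoid M \<longleftrightarrow> monoid M \<and>
     (\<forall>x\<in>carrier M. \<exists>!y. y \<in> carrier M \<and>
        x \<otimes>\<^bsub>M\<^esub> y \<otimes>\<^bsub>M\<^esub> x = x \<and> y \<otimes>\<^bsub>M\<^esub> x \<otimes>\<^bsub>M\<^esub> y = y)"

definition star :: "('a, 'b) monoid_scheme \<Rightarrow> 'a \<Rightarrow> 'a" where
  "star M x = (THE y. y \<in> carrier M \<and>
        x \<otimes>\<^bsub>M\<^esub> y \<otimes>\<^bsub>M\<^esub> x = x \<and> y \<otimes>\<^bsub>M\<^esub> x \<otimes>\<^bsub>M\<^esub> y = y)"

text \<open>Morphisms M \<rightarrow> M in Vect_{hat G} (functions on carrier M, extensional).\<close>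
definition End_set :: "'m monoid \<Rightarrow> 'm set \<Rightarrow> 'm \<Rightarrow> ('m \<Rightarrow> 'm) set" where
  "End_set M G z = {f. f \<in> extensional (carrier M) \<and> f \<in> carrier M \<rightarrow> carrier M \<and>
      f z = z \<and>
      (\<forall>g\<in>G. \<forall>v\<in>carrier M. f (g \<otimes>\<^bsub>M\<^esub> v) = g \<otimes>\<^bsub>M\<^esub> f v) \<and>
      (\<forall>v1\<in>carrier M. \<forall>v2\<in>carrier M. f v1 = f v2 \<and> f v1 \<noteq> z \<longrightarrow>
          (\<exists>g\<in>G. v1 = g \<otimes>\<^bsub>M\<^esub> v2))}"

definition End_mon :: "'m monoid \<Rightarrow> 'm set \<Rightarrow> 'm \<Rightarrow> ('m \<Rightarrow> 'm) monoid" where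
  "End_mon M G z = \<lparr> carrier = End_set M G z,
                     mult = (\<lambda>f h. compose (carrier M) f h),
                     one = (\<lambda>v\<in>carrier M. v) \<rparr>"

definition scal_End :: "'m monoid \<Rightarrow> 'm \<Rightarrow> ('m \<Rightarrow> 'm) \<Rightarrow> ('m \<Rightarrow> 'm)" where
  "scal_End M g f = (\<lambda>v\<in>carrier M. g \<otimes>\<^bsub>M\<^esub> f v)"

end

theory Submission
  imports Defs
begin

lemma (in monoid) inv_unique_comm:
  assumes ic: "\<And>e f. e \<in> carrier G \<Longrightarrow> f \<in> carrier G \<Longrightarrow> e \<otimes> e = e \<Longrightarrow> f \<otimes> f = f \<Longrightarrow> e \<otimes> f = f \<otimes> e"
    and c: "f \<in> carrier G" "h \<in> carrier G" "k \<in> carrier G"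
    and h1: "f \<otimes> h \<otimes> f = f" and h2: "h \<otimes> f \<otimes> h = h"
    and k1: "f \<otimes> k \<otimes> f = f" and k2: "k \<otimes> f \<otimes> k = k"
  shows "h = k"
proof -
  have i1: "(f \<otimes> k) \<otimes> (f \<otimes> k) = f \<otimes> k" using k1 c by (simp add: m_assoc[symmetric])
  have i2: "(f \<otimes> h) \<otimes> (f \<otimes> h) = f \<otimes> h" using h1 c by (simp add: m_assoc[symmetric])
  have i3: "(h \<otimes> f) \<otimes> (h \<otimes> f) = h \<otimes> f" using h2 c by (simp add: m_assoc[symmetric])
  have i4: "(k \<otimes> f) \<otimes> (k \<otimes> f) = k \<otimes> f" using k2 c by (simp add: m_assoc[symmetric])
  have "h = h \<otimes> (f \<otimes> k \<otimes> f) \<otimes> h" using h2 k1 c by simp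
  also have "\<dots> = h \<otimes> (f \<otimes> k) \<otimes> (f \<otimes> h)" using c by (simp add: m_assoc)
  also have "\<dots> = h \<otimes> (f \<otimes> h) \<otimes> (f \<otimes> k)" using ic[OF _ _ i1 i2] c by (simp add: m_assoc)
  also have "\<dots> = (h \<otimes> f \<otimes> h) \<otimes> f \<otimes> k" using c by (simp add: m_assoc)
  also have "\<dots> = h \<otimes> f \<otimes> k" using h2 by simp
  finally have hh: "h = h \<otimes> f \<otimes> k" .
  have "k = k \<otimes> (f \<otimes> h \<otimes> f) \<otimes> k" using k2 h1 c by simp
  also have "\<dots> = (k \<otimes> f) \<otimes> (h \<otimes> f) \<otimes> k" using c by (simp add: m_assoc)
  also have "\<dots> = (h \<otimes> f) \<otimes> (k \<otimes> f) \<otimes> k" using ic[OF _ _ i4 i3] c by simp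
  also have "\<dots> = h \<otimes> f \<otimes> (k \<otimes> f \<otimes> k)" using c by (simp add: m_assoc)
  also have "\<dots> = h \<otimes> f \<otimes> k" using k2 by simp
  finally show ?thesis using hh by simp
qed

locale ctx = monoid M for M :: "'m monoid" (structure) +
  fixes G :: "'m set" and z :: 'm
  assumes hg: "hatG_linear_monoid M G z" and im: "inverse_monoid M"
begin

abbreviation st where "st x \<equiv> star M x"

lemma z_in: "z \<in> carrier M" and zl: "x \<in> carrier M \<Longrightarrow> z \<otimes> x = z" and zr: "x \<in> carrier M \<Longrightarrow> x \<otimes> z = z"
  using hg unfolding hatG_linear_monoid_def by auto

lemma Gsub: "subgroup G (units_of M)" using hg unfolding hatG_linear_monoid_def by auto

lemma G_units: "g \<in> G \<Longrightarrow> g \<in> Units M"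
  using subgroup.subset[OF Gsub] by (auto simp: units_of_carrier)

lemma G_carr: "g \<in> G \<Longrightarrow> g \<in> carrier M" using G_units by (auto simp: Units_def)

lemma G_central: "g \<in> G \<Longrightarrow> x \<in> carrier M \<Longrightarrow> g \<otimes> x = x \<otimes> g"
  using hg unfolding hatG_linear_monoid_def by auto

lemma G_free: "g \<in> G \<Longrightarrow> x \<in> carrier M \<Longrightarrow> x \<noteq> z \<Longrightarrow> g \<otimes> x = x \<Longrightarrow> g = \<one>"
  using hg unfolding hatG_linear_monoid_def by auto

lemma G_one: "\<one> \<in> G" using subgroup.one_closed[OF Gsub] by (simp add: units_of_one)

lemma G_mult: "g \<in> G \<Longrightarrow> h \<in> G \<Longrightarrow> g \<otimes> h \<in> G"
  using subgroup.m_closed[OF Gsub] by (simp add: units_of_mult)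

lemma G_cancel: "g \<in> G \<Longrightarrow> a \<in> carrier M \<Longrightarrow> b \<in> carrier M \<Longrightarrow> g \<otimes> a = g \<otimes> b \<Longrightarrow> a = b"
  using G_units Units_l_cancel by blast

lemma st_props: assumes "x \<in> carrier M"
  shows "st x \<in> carrier M \<and> x \<otimes> st x \<otimes> x = x \<and> st x \<otimes> x \<otimes> st x = st x"
proof -
  have "\<exists>!y. y \<in> carrier M \<and> x \<otimes> y \<otimes> x = x \<and> y \<otimes> x \<otimes> y = y"
    using im assms unfolding inverse_monoid_def by blast
  then show ?thesis unfolding star_def by (rule theI')
qed

lemma st_carr: "x \<in> carrier M \<Longrightarrow> st x \<in> carrier M" using st_props by blast
lemma st1: "x \<in> carrier M \<Longrightarrow> x \<otimes> st x \<otimes> x = x" using st_props by blast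
lemma st2: "x \<in> carrier M \<Longrightarrow> st x \<otimes> x \<otimes> st x = st x" using st_props by blast

lemma st_uniq: assumes "x \<in> carrier M" "y \<in> carrier M" "x \<otimes> y \<otimes> x = x" "y \<otimes> x \<otimes> y = y"
  shows "st x = y"
proof -
  have "\<exists>!y. y \<in> carrier M \<and> x \<otimes> y \<otimes> x = x \<and> y \<otimes> x \<otimes> y = y"
    using im assms unfolding inverse_monoid_def by blast
  then show ?thesis unfolding star_def using assms by (intro the1_equality) auto
qed

lemma idem_prod: assumes c: "e \<in> carrier M" "f \<in> carrier M" and ie: "e \<otimes> e = e" and iff: "f \<otimes> f = f"
  shows "(e \<otimes> f) \<otimes> (e \<otimes> f) = e \<otimes> f"
proof -
  define a where "a = st (e \<otimes> f)"
  have ef: "e \<otimes> f \<in> carrier M" using c by simp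
  have ac: "a \<in> carrier M" and a1: "e \<otimes> f \<otimes> a \<otimes> (e \<otimes> f) = e \<otimes> f" and a2: "a \<otimes> (e \<otimes> f) \<otimes> a = a"
    using st_props[OF ef] unfolding a_def by auto
  have "e \<otimes> f \<otimes> (f \<otimes> a \<otimes> e) \<otimes> (e \<otimes> f) = e \<otimes> (f \<otimes> f) \<otimes> a \<otimes> (e \<otimes> e) \<otimes> f"
    using c ac by (simp add: m_assoc)
  also have "\<dots> = e \<otimes> f \<otimes> a \<otimes> (e \<otimes> f)" using c ac ie iff by (simp add: m_assoc)
  finally have b1: "e \<otimes> f \<otimes> (f \<otimes> a \<otimes> e) \<otimes> (e \<otimes> f) = e \<otimes> f" using a1 by simp
  have "f \<otimes> a \<otimes> e \<otimes> (e \<otimes> f) \<otimes> (f \<otimes> a \<otimes> e) = f \<otimes> a \<otimes> (e \<otimes> e) \<otimes> (f \<otimes> f) \<otimes> a \<otimes> e"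
    using c ac by (simp add: m_assoc)
  also have "\<dots> = f \<otimes> (a \<otimes> (e \<otimes> f) \<otimes> a) \<otimes> e" using c ac ie iff by (simp add: m_assoc)
  finally have b2: "f \<otimes> a \<otimes> e \<otimes> (e \<otimes> f) \<otimes> (f \<otimes> a \<otimes> e) = f \<otimes> a \<otimes> e" using a2 by simp
  have "st (e \<otimes> f) = f \<otimes> a \<otimes> e" using st_uniq[OF ef _ b1 b2] c ac by simp
  then have afe: "a = f \<otimes> a \<otimes> e" by (simp add: a_def)
  have "a \<otimes> a = f \<otimes> (a \<otimes> (e \<otimes> f) \<otimes> a) \<otimes> e"
    using c ac by (subst (1 2) afe) (simp add: m_assoc)
  also have "\<dots> = a" using a2 afe by simp
  finally have aa: "a \<otimes> a = a" .
  have "st a = a" using st_uniq[OF ac ac] aa ac by simp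
  moreover have "st a = e \<otimes> f" using st_uniq[OF ac ef a2] a1 ef ac by (simp add: m_assoc)
  ultimately have "e \<otimes> f = a" by simp
  then show ?thesis using aa by simp
qed

lemma idem_comm: assumes c: "e \<in> carrier M" "f \<in> carrier M" and ie: "e \<otimes> e = e" and iff: "f \<otimes> f = f"
  shows "e \<otimes> f = f \<otimes> e"
proof -
  have p1: "(e \<otimes> f) \<otimes> (e \<otimes> f) = e \<otimes> f" by (rule idem_prod[OF c ie iff])
  have p2: "(f \<otimes> e) \<otimes> (f \<otimes> e) = f \<otimes> e" by (rule idem_prod[OF c(2,1) iff ie])
  have ef: "e \<otimes> f \<in> carrier M" "f \<otimes> e \<in> carrier M" using c by auto
  have "e \<otimes> f \<otimes> (f \<otimes> e) \<otimes> (e \<otimes> f) = (e \<otimes> f) \<otimes> (e \<otimes> f)"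
  proof -
    have "e \<otimes> f \<otimes> (f \<otimes> e) \<otimes> (e \<otimes> f) = e \<otimes> (f \<otimes> f) \<otimes> (e \<otimes> e) \<otimes> f" using c by (simp add: m_assoc)
    then show ?thesis using ie iff c by (simp add: m_assoc)
  qed
  then have q1: "e \<otimes> f \<otimes> (f \<otimes> e) \<otimes> (e \<otimes> f) = e \<otimes> f" using p1 by simp
  have "f \<otimes> e \<otimes> (e \<otimes> f) \<otimes> (f \<otimes> e) = (f \<otimes> e) \<otimes> (f \<otimes> e)"
  proof -
    have "f \<otimes> e \<otimes> (e \<otimes> f) \<otimes> (f \<otimes> e) = f \<otimes> (e \<otimes> e) \<otimes> (f \<otimes> f) \<otimes> e" using c by (simp add: m_assoc)
    then show ?thesis using ie iff c by (simp add: m_assoc)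
  qed
  then have q2: "f \<otimes> e \<otimes> (e \<otimes> f) \<otimes> (f \<otimes> e) = f \<otimes> e" using p2 by simp
  have "st (e \<otimes> f) = f \<otimes> e" using st_uniq[OF ef q1 q2] .
  moreover have "st (e \<otimes> f) = e \<otimes> f" using st_uniq[OF ef(1) ef(1)] p1 by (simp add: m_assoc[symmetric])
  ultimately show ?thesis by simp
qed


lemma idem_l: assumes x: "x \<in> carrier M" shows "st x \<otimes> x \<otimes> (st x \<otimes> x) = st x \<otimes> x"
proof -
  have "st x \<otimes> x \<otimes> (st x \<otimes> x) = (st x \<otimes> x \<otimes> st x) \<otimes> x" using x st_carr[OF x] by (simp add: m_assoc)
  then show ?thesis using st2[OF x] by simp
qed
lemma idem_r: assumes x: "x \<in> carrier M" shows "x \<otimes> st x \<otimes> (x \<otimes> st x) = x \<otimes> st x"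
proof -
  have "x \<otimes> st x \<otimes> (x \<otimes> st x) = (x \<otimes> st x \<otimes> x) \<otimes> st x" using x st_carr[OF x] by (simp add: m_assoc)
  then show ?thesis using st1[OF x] by simp
qed

lemma st_mult: assumes c: "x \<in> carrier M" "y \<in> carrier M"
  shows "st (x \<otimes> y) = st y \<otimes> st x"
proof -
  have cs: "st x \<in> carrier M" "st y \<in> carrier M" using c st_carr by auto
  have com: "st x \<otimes> x \<otimes> (y \<otimes> st y) = y \<otimes> st y \<otimes> (st x \<otimes> x)"
    using idem_comm[OF _ _ idem_l idem_r] c cs by auto
  have "x \<otimes> y \<otimes> (st y \<otimes> st x) \<otimes> (x \<otimes> y) = x \<otimes> (y \<otimes> st y \<otimes> (st x \<otimes> x)) \<otimes> y"
    using c cs by (simp add: m_assoc)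
  also have "\<dots> = x \<otimes> (st x \<otimes> x \<otimes> (y \<otimes> st y)) \<otimes> y" using com by simp
  also have "\<dots> = (x \<otimes> st x \<otimes> x) \<otimes> (y \<otimes> st y \<otimes> y)" using c cs by (simp add: m_assoc)
  also have "\<dots> = x \<otimes> y" using st1 c by simp
  finally have e1: "x \<otimes> y \<otimes> (st y \<otimes> st x) \<otimes> (x \<otimes> y) = x \<otimes> y" .
  have "st y \<otimes> st x \<otimes> (x \<otimes> y) \<otimes> (st y \<otimes> st x) = st y \<otimes> (st x \<otimes> x \<otimes> (y \<otimes> st y)) \<otimes> st x"
    using c cs by (simp add: m_assoc)
  also have "\<dots> = st y \<otimes> (y \<otimes> st y \<otimes> (st x \<otimes> x)) \<otimes> st x" using com by simp
  also have "\<dots> = (st y \<otimes> y \<otimes> st y) \<otimes> (st x \<otimes> x \<otimes> st x)" using c cs by (simp add: m_assoc)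
  also have "\<dots> = st y \<otimes> st x" using st2 c by simp
  finally have e2: "st y \<otimes> st x \<otimes> (x \<otimes> y) \<otimes> (st y \<otimes> st x) = st y \<otimes> st x" .
  show ?thesis using st_uniq[OF _ _ e1 e2] c cs by simp
qed

lemma st_one: "st \<one> = \<one>" using st_uniq[of \<one> \<one>] by simp

lemma st_z: "st z = z" using st_uniq[of z z] z_in zl by simp

lemma G_inv: "g \<in> G \<Longrightarrow> inv g \<in> G"
  using subgroup.m_inv_closed[OF Gsub] units_of_inv G_units by metis

lemma st_g: assumes g: "g \<in> G" and x: "x \<in> carrier M"
  shows "st (g \<otimes> x) \<otimes> (g \<otimes> x) = st x \<otimes> x"
proof -
  have gc: "g \<in> carrier M" "inv g \<in> carrier M" using g G_carr G_inv by auto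
  have gi: "inv g \<otimes> g = \<one>" "g \<otimes> inv g = \<one>" using g G_units by auto
  have cs: "st x \<in> carrier M" using x st_carr by auto
  have cen: "\<And>w. w \<in> carrier M \<Longrightarrow> w \<otimes> inv g = inv g \<otimes> w" "\<And>w. w \<in> carrier M \<Longrightarrow> w \<otimes> g = g \<otimes> w"
    using G_central g G_inv by auto
  have k1: "(g \<otimes> x) \<otimes> (inv g \<otimes> st x) = x \<otimes> st x"
  proof -
    have "(g \<otimes> x) \<otimes> (inv g \<otimes> st x) = g \<otimes> (x \<otimes> inv g) \<otimes> st x" using gc x cs by (simp add: m_assoc)
    also have "\<dots> = (g \<otimes> inv g) \<otimes> x \<otimes> st x" using cen(1)[OF x] gc x cs by (simp add: m_assoc)
    finally show ?thesis using gi x cs by simp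
  qed
  have k2: "(inv g \<otimes> st x) \<otimes> (g \<otimes> x) = st x \<otimes> x"
  proof -
    have "(inv g \<otimes> st x) \<otimes> (g \<otimes> x) = inv g \<otimes> (st x \<otimes> g) \<otimes> x" using gc x cs by (simp add: m_assoc)
    also have "\<dots> = (inv g \<otimes> g) \<otimes> st x \<otimes> x" using cen(2)[OF cs] gc x cs by (simp add: m_assoc)
    finally show ?thesis using gi x cs by simp
  qed
  have gx: "g \<otimes> x \<in> carrier M" "inv g \<otimes> st x \<in> carrier M" using gc x cs by auto
  have "g \<otimes> x \<otimes> (inv g \<otimes> st x) \<otimes> (g \<otimes> x) = (g \<otimes> x) \<otimes> ((inv g \<otimes> st x) \<otimes> (g \<otimes> x))"
    using gx by (simp add: m_assoc)
  also have "\<dots> = g \<otimes> (x \<otimes> st x \<otimes> x)" using k2 gc x cs by (simp add: m_assoc)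
  finally have e1: "g \<otimes> x \<otimes> (inv g \<otimes> st x) \<otimes> (g \<otimes> x) = g \<otimes> x" using st1[OF x] by simp
  have "inv g \<otimes> st x \<otimes> (g \<otimes> x) \<otimes> (inv g \<otimes> st x) = (inv g \<otimes> st x) \<otimes> ((g \<otimes> x) \<otimes> (inv g \<otimes> st x))"
    using gx by (simp add: m_assoc)
  also have "\<dots> = inv g \<otimes> (st x \<otimes> x \<otimes> st x)" using k1 gc x cs by (simp add: m_assoc)
  finally have e2: "inv g \<otimes> st x \<otimes> (g \<otimes> x) \<otimes> (inv g \<otimes> st x) = inv g \<otimes> st x" using st2[OF x] by simp
  have "st (g \<otimes> x) = inv g \<otimes> st x" using st_uniq[OF gx e1 e2] .
  then show ?thesis using k2 by simp
qed


abbreviation E where "E \<equiv> End_mon M G z"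

lemma End_mem: "f \<in> End_set M G z \<longleftrightarrow> f \<in> extensional (carrier M) \<and> f \<in> carrier M \<rightarrow> carrier M \<and>
      f z = z \<and>
      (\<forall>g\<in>G. \<forall>v\<in>carrier M. f (g \<otimes> v) = g \<otimes> f v) \<and>
      (\<forall>v1\<in>carrier M. \<forall>v2\<in>carrier M. f v1 = f v2 \<and> f v1 \<noteq> z \<longrightarrow>
          (\<exists>g\<in>G. v1 = g \<otimes> v2))"
  unfolding End_set_def by simp

lemma comp_closed: assumes f: "f \<in> End_set M G z" and h: "h \<in> End_set M G z"
  shows "compose (carrier M) f h \<in> End_set M G z"
  unfolding End_mem
proof (intro conjI ballI impI)
  show "compose (carrier M) f h \<in> extensional (carrier M)" by simp
  show "compose (carrier M) f h \<in> carrier M \<rightarrow> carrier M"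
    using f h unfolding End_mem by (auto simp: Pi_def compose_eq)
  show "compose (carrier M) f h z = z" using f h z_in by (simp add: compose_eq End_mem)
next
  fix g v assume g: "g \<in> G" and v: "v \<in> carrier M"
  have "h v \<in> carrier M" using h v by (auto simp: End_mem)
  then show "compose (carrier M) f h (g \<otimes> v) = g \<otimes> compose (carrier M) f h v"
    using f h g v G_carr by (simp add: compose_eq End_mem)
next
  fix v1 v2 assume v: "v1 \<in> carrier M" "v2 \<in> carrier M"
    and e: "compose (carrier M) f h v1 = compose (carrier M) f h v2 \<and> compose (carrier M) f h v1 \<noteq> z"
  have hv: "h v1 \<in> carrier M" "h v2 \<in> carrier M" using h v by (auto simp: End_mem)
  have e': "f (h v1) = f (h v2)" "f (h v1) \<noteq> z" using e v by (auto simp: compose_eq)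
  then obtain g1 where g1: "g1 \<in> G" "h v1 = g1 \<otimes> h v2" using f hv unfolding End_mem by blast
  have "h v1 \<noteq> z" using e' f by (auto simp: End_mem)
  moreover have "h v1 = h (g1 \<otimes> v2)" using g1 h v by (simp add: End_mem)
  ultimately obtain g2 where g2: "g2 \<in> G" "v1 = g2 \<otimes> (g1 \<otimes> v2)"
    using h v g1 G_carr unfolding End_mem by (metis m_closed)
  show "\<exists>g\<in>G. v1 = g \<otimes> v2"
    using g1 g2 v G_carr G_mult by (intro bexI[of _ "g2 \<otimes> g1"]) (auto simp: m_assoc)
qed

lemma id_End: "(\<lambda>v\<in>carrier M. v) \<in> End_set M G z"
  unfolding End_mem using z_in G_carr G_one by (auto intro!: bexI[of _ \<one>])

lemma End_monoid: "monoid E"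
proof (rule monoidI)
  fix x y assume "x \<in> carrier E" "y \<in> carrier E"
  then show "x \<otimes>\<^bsub>E\<^esub> y \<in> carrier E" by (simp add: End_mon_def comp_closed)
next
  show "\<one>\<^bsub>E\<^esub> \<in> carrier E" by (simp add: End_mon_def id_End)
next
  fix x y w assume "x \<in> carrier E" "y \<in> carrier E" "w \<in> carrier E"
  then show "x \<otimes>\<^bsub>E\<^esub> y \<otimes>\<^bsub>E\<^esub> w = x \<otimes>\<^bsub>E\<^esub> (y \<otimes>\<^bsub>E\<^esub> w)"
    by (simp add: End_mon_def End_mem compose_assoc[symmetric])
next
  fix x assume "x \<in> carrier E"
  then show "\<one>\<^bsub>E\<^esub> \<otimes>\<^bsub>E\<^esub> x = x" "x \<otimes>\<^bsub>E\<^esub> \<one>\<^bsub>E\<^esub> = x"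
    by (auto simp add: End_mon_def End_mem Id_compose compose_Id)
qed

lemma End_idem: assumes e: "e \<in> End_set M G z" and ee: "compose (carrier M) e e = e" and v: "v \<in> carrier M"
  shows "e v = v \<or> e v = z"
proof (rule disjCI)
  assume nz: "e v \<noteq> z"
  have ev: "e v \<in> carrier M" using e v by (auto simp: End_mem)
  have eev: "e (e v) = e v" using ee v by (metis compose_eq)
  then obtain g where g: "g \<in> G" "e v = g \<otimes> v" using e ev v nz unfolding End_mem by metis
  have "e v = e (g \<otimes> v)" using eev g by simp
  also have "\<dots> = g \<otimes> e v" using e g v by (simp add: End_mem)
  finally have "g = \<one>" using G_free[OF g(1) ev nz] by simp
  then show "e v = v" using g v by simp
qed

lemma End_comm: assumes e: "e \<in> carrier E" "f \<in> carrier E" and ee: "e \<otimes>\<^bsub>E\<^esub> e = e" "f \<otimes>\<^bsub>E\<^esub> f = f"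
  shows "e \<otimes>\<^bsub>E\<^esub> f = f \<otimes>\<^bsub>E\<^esub> e"
proof -
  have e': "e \<in> End_set M G z" "f \<in> End_set M G z" using e by (auto simp: End_mon_def)
  have ee': "compose (carrier M) e e = e" "compose (carrier M) f f = f" using ee by (auto simp: End_mon_def)
  have "compose (carrier M) e f = compose (carrier M) f e"
  proof (rule extensionalityI[OF compose_extensional compose_extensional])
    fix v assume v: "v \<in> carrier M"
    have ez: "e z = z" "f z = z" using e' by (auto simp: End_mem)
    show "compose (carrier M) e f v = compose (carrier M) f e v"
      using End_idem[OF e'(1) ee'(1) v] End_idem[OF e'(2) ee'(2) v] ez v by (auto simp: compose_eq)
  qed
  then show ?thesis by (simp add: End_mon_def)
qed

lemma End_star: assumes c: "f \<in> carrier E" "h \<in> carrier E"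
    and h1: "f \<otimes>\<^bsub>E\<^esub> h \<otimes>\<^bsub>E\<^esub> f = f" and h2: "h \<otimes>\<^bsub>E\<^esub> f \<otimes>\<^bsub>E\<^esub> h = h"
  shows "star E f = h"
  unfolding star_def
proof (rule the_equality)
  show "h \<in> carrier E \<and> f \<otimes>\<^bsub>E\<^esub> h \<otimes>\<^bsub>E\<^esub> f = f \<and> h \<otimes>\<^bsub>E\<^esub> f \<otimes>\<^bsub>E\<^esub> h = h" using c h1 h2 by simp
next
  fix k assume "k \<in> carrier E \<and> f \<otimes>\<^bsub>E\<^esub> k \<otimes>\<^bsub>E\<^esub> f = f \<and> k \<otimes>\<^bsub>E\<^esub> f \<otimes>\<^bsub>E\<^esub> k = k"
  then show "k = h"
    using monoid.inv_unique_comm[OF End_monoid, of f h k] End_comm c h1 h2 by metis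
qed


definition phi where "phi x = (\<lambda>v\<in>carrier M. if st x \<otimes> x \<otimes> v = v then x \<otimes> v else z)"

lemma phi_End: assumes x: "x \<in> carrier M" shows "phi x \<in> End_set M G z"
  unfolding End_mem
proof (intro conjI ballI impI)
  have sx: "st x \<in> carrier M" using st_carr x by auto
  show "phi x \<in> extensional (carrier M)" unfolding phi_def by simp
  show "phi x \<in> carrier M \<rightarrow> carrier M" unfolding phi_def using x z_in by auto
  show "phi x z = z" unfolding phi_def using x sx z_in zr by simp
next
  fix g v assume g: "g \<in> G" and v: "v \<in> carrier M"
  have sx: "st x \<in> carrier M" using st_carr x by auto
  have gc: "g \<in> carrier M" using G_carr g by auto
  have e1: "st x \<otimes> x \<otimes> (g \<otimes> v) = g \<otimes> (st x \<otimes> x \<otimes> v)"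
    using G_central[OF g, of "st x \<otimes> x"] sx x gc v by (metis m_assoc m_closed)
  have e2: "x \<otimes> (g \<otimes> v) = g \<otimes> (x \<otimes> v)"
    using G_central[OF g, of x] x gc v by (metis m_assoc)
  have iff: "(g \<otimes> (st x \<otimes> x \<otimes> v) = g \<otimes> v) \<longleftrightarrow> (st x \<otimes> x \<otimes> v = v)"
    using G_cancel[OF g, of "st x \<otimes> x \<otimes> v" v] sx x v by auto
  show "phi x (g \<otimes> v) = g \<otimes> phi x v"
    unfolding phi_def using e1 e2 iff v gc zr by simp
next
  fix v1 v2 assume v: "v1 \<in> carrier M" "v2 \<in> carrier M" and e: "phi x v1 = phi x v2 \<and> phi x v1 \<noteq> z"
  have sx: "st x \<in> carrier M" using st_carr x by auto
  have c1: "st x \<otimes> x \<otimes> v1 = v1" and c2: "st x \<otimes> x \<otimes> v2 = v2" and xe: "x \<otimes> v1 = x \<otimes> v2"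
    using e v unfolding phi_def by (auto split: if_splits)
  have "v1 = st x \<otimes> (x \<otimes> v1)" using c1 sx x v by (simp add: m_assoc)
  also have "\<dots> = v2" using xe c2 sx x v by (simp add: m_assoc)
  finally show "\<exists>g\<in>G. v1 = g \<otimes> v2" using G_one v by (auto intro!: bexI[of _ \<one>])
qed

lemma cond_iff: assumes x: "x \<in> carrier M" and y: "y \<in> carrier M" and v: "v \<in> carrier M"
  shows "st (x \<otimes> y) \<otimes> (x \<otimes> y) \<otimes> v = v \<longleftrightarrow> (st y \<otimes> y \<otimes> v = v \<and> st x \<otimes> x \<otimes> (y \<otimes> v) = y \<otimes> v)"
proof -
  have sx: "st x \<in> carrier M" and sy: "st y \<in> carrier M" using st_carr x y by auto
  define e where "e = st x \<otimes> x"
  define f where "f = y \<otimes> st y"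
  have ec: "e \<in> carrier M" and fc: "f \<in> carrier M" using sx sy x y by (auto simp: e_def f_def)
  have lhs: "st (x \<otimes> y) \<otimes> (x \<otimes> y) \<otimes> v = st y \<otimes> (e \<otimes> (y \<otimes> v))"
    using st_mult[OF x y] sx sy x y v by (simp add: m_assoc e_def)
  have r2: "st x \<otimes> x \<otimes> (y \<otimes> v) = e \<otimes> (y \<otimes> v)" by (simp add: e_def)
  show ?thesis unfolding lhs r2
  proof
    assume w: "st y \<otimes> (e \<otimes> (y \<otimes> v)) = v"
    have "st y \<otimes> y \<otimes> v = st y \<otimes> y \<otimes> (st y \<otimes> (e \<otimes> (y \<otimes> v)))" using w by simp
    also have "\<dots> = (st y \<otimes> y \<otimes> st y) \<otimes> (e \<otimes> (y \<otimes> v))" using sy y ec v by (simp add: m_assoc)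
    also have "\<dots> = v" using st2[OF y] w by simp
    finally have A: "st y \<otimes> y \<otimes> v = v" .
    have "e \<otimes> (y \<otimes> v) = e \<otimes> (y \<otimes> (st y \<otimes> (e \<otimes> (y \<otimes> v))))" using w by simp
    also have "\<dots> = (e \<otimes> f) \<otimes> (e \<otimes> (y \<otimes> v))" using sy y ec v by (simp add: m_assoc f_def)
    also have "\<dots> = (f \<otimes> e) \<otimes> (e \<otimes> (y \<otimes> v))"
      using idem_comm[OF ec fc] idem_l[OF x] idem_r[OF y] by (simp add: e_def f_def)
    also have "\<dots> = f \<otimes> (e \<otimes> e) \<otimes> (y \<otimes> v)" using fc ec y v by (simp add: m_assoc)
    also have "\<dots> = y \<otimes> (st y \<otimes> (e \<otimes> (y \<otimes> v)))" using idem_l[OF x] sy y ec v by (simp add: m_assoc e_def f_def)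
    also have "\<dots> = y \<otimes> v" using w by simp
    finally show "st y \<otimes> y \<otimes> v = v \<and> e \<otimes> (y \<otimes> v) = y \<otimes> v" using A by simp
  next
    assume "st y \<otimes> y \<otimes> v = v \<and> e \<otimes> (y \<otimes> v) = y \<otimes> v"
    then show "st y \<otimes> (e \<otimes> (y \<otimes> v)) = v" using sy y v by (simp add: m_assoc)
  qed
qed

lemma phi_mult: assumes x: "x \<in> carrier M" and y: "y \<in> carrier M"
  shows "phi (x \<otimes> y) = compose (carrier M) (phi x) (phi y)"
proof (rule extensionalityI[OF _ compose_extensional])
  show "phi (x \<otimes> y) \<in> extensional (carrier M)" unfolding phi_def by simp
  fix v assume v: "v \<in> carrier M"
  have sx: "st x \<in> carrier M" using st_carr x by auto
  show "phi (x \<otimes> y) v = compose (carrier M) (phi x) (phi y) v"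
    unfolding compose_eq[OF v] using cond_iff[OF x y v] x y v z_in sx zr
    by (simp add: phi_def m_assoc)
qed

lemma phi_one: "phi \<one> = (\<lambda>v\<in>carrier M. v)"
  unfolding phi_def st_one by (rule restrict_ext) simp

lemma phi_self: "x \<in> carrier M \<Longrightarrow> phi x (st x \<otimes> x) = x"
  unfolding phi_def using idem_l st_carr by (simp add: m_assoc[symmetric] st1)

lemma phi_half: assumes x: "x \<in> carrier M" and y: "y \<in> carrier M" and nz: "x \<noteq> z" and eq: "phi x = phi y"
  shows "y \<otimes> (st x \<otimes> x) = x \<and> y \<noteq> z"
proof -
  have sx: "st x \<in> carrier M" using st_carr x by auto
  have "phi y (st x \<otimes> x) = x" using phi_self[OF x] eq by simp
  then have "(if st y \<otimes> y \<otimes> (st x \<otimes> x) = st x \<otimes> x then y \<otimes> (st x \<otimes> x) else z) = x"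
    unfolding phi_def using sx x by simp
  then have h: "y \<otimes> (st x \<otimes> x) = x" using nz by (auto split: if_splits)
  then show ?thesis using nz zl sx x by auto
qed

lemma phi_inj: "inj_on phi (carrier M)"
proof (rule inj_onI)
  fix x y assume x: "x \<in> carrier M" and y: "y \<in> carrier M" and eq: "phi x = phi y"
  have sx: "st x \<in> carrier M" and sy: "st y \<in> carrier M" using st_carr x y by auto
  show "x = y"
  proof (cases "x = z")
    case True
    show ?thesis
    proof (rule ccontr)
      assume "x \<noteq> y"
      then have "y \<noteq> z" using True by simp
      then have "x \<otimes> (st y \<otimes> y) = y" using phi_half[OF y x _ eq[symmetric]] by simp
      then show False using True zl sy y \<open>y \<noteq> z\<close> by auto
    qed
  next
    case False
    have h1: "y \<otimes> (st x \<otimes> x) = x" and yz: "y \<noteq> z" using phi_half[OF x y False eq] by auto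
    have h2: "x \<otimes> (st y \<otimes> y) = y" using phi_half[OF y x yz eq[symmetric]] by auto
    have "x = x \<otimes> (st y \<otimes> y) \<otimes> (st x \<otimes> x)" using h1 h2 by simp
    also have "\<dots> = x \<otimes> ((st x \<otimes> x) \<otimes> (st y \<otimes> y))"
      using idem_comm[OF _ _ idem_l[OF y] idem_l[OF x]] x y sx sy by (simp add: m_assoc)
    also have "\<dots> = (x \<otimes> st x \<otimes> x) \<otimes> (st y \<otimes> y)" using x y sx sy by (simp add: m_assoc)
    also have "\<dots> = y" using st1[OF x] h2 by simp
    finally show ?thesis .
  qed
qed

lemma phi_scal: assumes g: "g \<in> G" and x: "x \<in> carrier M"
  shows "phi (g \<otimes> x) = scal_End M g (phi x)"
  unfolding scal_End_def phi_def
proof (rule restrict_ext)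
  fix v assume v: "v \<in> carrier M"
  have gc: "g \<in> carrier M" using G_carr g by auto
  have "st (g \<otimes> x) \<otimes> (g \<otimes> x) \<otimes> v = st x \<otimes> x \<otimes> v" using st_g[OF g x] by simp
  then show "(if st (g \<otimes> x) \<otimes> (g \<otimes> x) \<otimes> v = v then g \<otimes> x \<otimes> v else z) =
         g \<otimes> (\<lambda>v\<in>carrier M. if st x \<otimes> x \<otimes> v = v then x \<otimes> v else z) v"
    using v gc x zr by (simp add: m_assoc)
qed

lemma phi_star: assumes x: "x \<in> carrier M" shows "phi (st x) = star E (phi x)"
proof -
  have sx: "st x \<in> carrier M" using st_carr x by auto
  have c: "phi x \<in> carrier E" "phi (st x) \<in> carrier E" using phi_End x sx by (auto simp: End_mon_def)
  have m: "\<And>a b. a \<in> carrier M \<Longrightarrow> b \<in> carrier M \<Longrightarrow> phi a \<otimes>\<^bsub>E\<^esub> phi b = phi (a \<otimes> b)"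
    by (simp add: End_mon_def phi_mult)
  have h1: "phi x \<otimes>\<^bsub>E\<^esub> phi (st x) \<otimes>\<^bsub>E\<^esub> phi x = phi x" using m x sx st1[OF x] by simp
  have h2: "phi (st x) \<otimes>\<^bsub>E\<^esub> phi x \<otimes>\<^bsub>E\<^esub> phi (st x) = phi (st x)" using m x sx st2[OF x] by simp
  show ?thesis using End_star[OF c h1 h2] by simp
qed

end

theorem mainTheorem6:
  fixes M :: "'m monoid" and G :: "'m set" and z :: 'm
  assumes "hatG_linear_monoid M G z"
    and "inverse_monoid M"
  shows "\<exists>\<phi>. \<phi> \<in> hom M (End_mon M G z) \<and> \<phi> \<one>\<^bsub>M\<^esub> = \<one>\<^bsub>End_mon M G z\<^esub> \<and>
             inj_on \<phi> (carrier M) \<and>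
             (\<forall>x\<in>carrier M. \<phi> (star M x) = star (End_mon M G z) (\<phi> x)) \<and>
             (\<forall>x\<in>carrier M. \<forall>g\<in>G. \<phi> (g \<otimes>\<^bsub>M\<^esub> x) = scal_End M g (\<phi> x))"
proof -
  have "ctx M G z"
    using assms by (intro ctx.intro ctx_axioms.intro) (auto simp: hatG_linear_monoid_def)
  then interpret ctx M G z .
  show ?thesis
  proof (intro exI conjI ballI)
    show "phi \<in> hom M (End_mon M G z)"
      unfolding hom_def using phi_End phi_mult by (auto simp: End_mon_def)
    show "phi \<one>\<^bsub>M\<^esub> = \<one>\<^bsub>End_mon M G z\<^esub>" by (simp add: phi_one End_mon_def)
    show "inj_on phi (carrier M)" by (rule phi_inj)
    show "\<And>x. x \<in> carrier M \<Longrightarrow> phi (star M x) = star (End_mon M G z) (phi x)" by (rule phi_star)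
    show "\<And>x g. x \<in> carrier M \<Longrightarrow> g \<in> G \<Longrightarrow> phi (g \<otimes>\<^bsub>M\<^esub> x) = scal_End M g (phi x)"
      by (rule phi_scal)
  qed
qed

end
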